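(* For any real $R\ge 1$, there exists an $R$-competitive incremental algorithm for frequency allocation in bipartite graphs if and only if there exists an $R$-competitive F-system.
   Context: Frequency allocation: a (possibly infinite) undirected graph $G$ is given. Requests arrive one at a time, each at some vertex. An incremental algorithm must, on arrival of each request, immediately and irrevocably assign it a frequency (a positive integer). After every step, for the current loads $\ell_v$ (number of requests that have arrived at vertex $v$), letting $L_v$ be the set of frequencies assigned to requests at $v$: all $\ell_v$ requests at $v$ have distinct frequencies (so $|L_v|=\ell_v$), and $L_v\cap L_w=\emptyset$ for every edge $(v,w)$. The cost is the number of distinct frequencies used, $|\bigcup_v L_v|$. ${\textit{opt}}(G,\bar\ell)$ denotes the minimum of $|\bigcup_v L_v|$ over all assignments of sets $L_v$ of positive integers with $|L_v|=\ell_v$ and $L_v\cap L_w=\emptyset$ for every edge $(v,w)$. An incremental algorithm is $R$-competitive for bipartite graphs if there is a constant $\lambda$ such that for every bipartite graph $G$ and every request sequence, the number of frequencies used is at most $R\cdot{\textit{opt}}(G,\bar\ell)+\lambda$, where $\bar\ell$ is the load vector of the sequence. F-system: a family $\mathcal F=\{F^c_{t,k}\}$ of sets of positive integers, indexed by $c\in\{A,B\}$ and integers $0<k\le t$, such that (F1) $|F^c_{t,k}|\ge k$ for all $c,t,k$; and (F2) $F^A_{t,k}\cap F^B_{t',k'}=\emptyset$ for all $k\le t$, $k'\le t'$ with $k+k'\le\max(t,t')$. An F-system is $R$-competitive if there is a constant $\lambda$ (independent of $t$) such that for every positive integer $t$, $\left|\bigcup_{c\in\{A,B\}}\bigcup_{0<\kappa\le\tau\le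 t}F^c_{\tau,\kappa}\right|\le Rt+\lambda$. *)

theory Defs
  imports Complex_Main
begin

text \<open>An undirected graph on vertex type 'v is a symmetric edge relation. Graphs may be infinite.\<close>

definition bipartite_graph :: "('v \<Rightarrow> 'v \<Rightarrow> bool) \<Rightarrow> bool" where
  "bipartite_graph E \<longleftrightarrow>
     (\<forall>v w. E v w \<longrightarrow> E w v) \<and> (\<exists>side :: 'v \<Rightarrow> bool. \<forall>v w. E v w \<longrightarrow> side v \<noteq> side w)"

definition load :: "'v list \<Rightarrow> 'v \<Rightarrow> nat" where
  "load xs v = length (filter (\<lambda>u. u = v) xs)"

definition feasible_assignment ::
  "('v \<Rightarrow> 'v \<Rightarrow> bool) \<Rightarrow> ('v \<Rightarrow> nat) \<Rightarrow> ('v \<Rightarrow> nat set) \<Rightarrow> bool" where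
  "feasible_assignment E l L \<longleftrightarrow>
     (\<forall>v. finite (L v) \<and> card (L v) = l v \<and> 0 \<notin> L v) \<and>
     (\<forall>v w. E v w \<longrightarrow> L v \<inter> L w = {})"

definition opt :: "('v \<Rightarrow> 'v \<Rightarrow> bool) \<Rightarrow> ('v \<Rightarrow> nat) \<Rightarrow> nat" where
  "opt E l = (LEAST n. \<exists>L. feasible_assignment E l L \<and> finite (\<Union>v. L v)
                              \<and> card (\<Union>v. L v) = n)"

text \<open>An incremental algorithm knows the graph E. Given the request sequence so far
  (the last element being the newly arrived request), it returns the frequency of
  the newly arrived request. Thus request number i of a sequence xs receives
  frequency alg E (take (Suc i) xs); this encodes both that the decision is made
  on arrival (depends only on the prefix) and that it is irrevocable.\<close>

type_synonym 'v algorithm = "('v \<Rightarrow> 'v \<Rightarrow> bool) \<Rightarrow> 'v list \<Rightarrow> nat"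

definition alg_freqs :: "'v algorithm \<Rightarrow> ('v \<Rightarrow> 'v \<Rightarrow> bool) \<Rightarrow> 'v list \<Rightarrow> 'v \<Rightarrow> nat set" where
  "alg_freqs alg E xs v = {alg E (take (Suc i) xs) | i. i < length xs \<and> xs ! i = v}"

text \<open>Validity after the whole sequence xs (validity after every step follows by
  requiring this for every sequence, in particular every prefix).\<close>
definition alg_valid :: "'v algorithm \<Rightarrow> ('v \<Rightarrow> 'v \<Rightarrow> bool) \<Rightarrow> 'v list \<Rightarrow> bool" where
  "alg_valid alg E xs \<longleftrightarrow>
     (\<forall>v. card (alg_freqs alg E xs v) = load xs v \<and> 0 \<notin> alg_freqs alg E xs v) \<and>
     (\<forall>v w. E v w \<longrightarrow> alg_freqs alg E xs v \<inter> alg_freqs alg E xs w = {})"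

definition alg_cost :: "'v algorithm \<Rightarrow> ('v \<Rightarrow> 'v \<Rightarrow> bool) \<Rightarrow> 'v list \<Rightarrow> nat" where
  "alg_cost alg E xs = card (\<Union>v. alg_freqs alg E xs v)"

definition competitive_alg :: "real \<Rightarrow> 'v algorithm \<Rightarrow> bool" where
  "competitive_alg R alg \<longleftrightarrow>
     (\<exists>lam::real. \<forall>E xs. bipartite_graph E \<longrightarrow>
        alg_valid alg E xs \<and>
        real (alg_cost alg E xs) \<le> R * real (opt E (load xs)) + lam)"

text \<open>Colour c: True stands for A, False for B. F c t k is F^c_{t,k}; only indices
  0 < k \<le> t are relevant.\<close>

type_synonym fsys = "bool \<Rightarrow> nat \<Rightarrow> nat \<Rightarrow> nat set"

definition F_system :: "fsys \<Rightarrow> bool" where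
  "F_system F \<longleftrightarrow>
     (\<forall>c t k. 0 < k \<and> k \<le> t \<longrightarrow> 0 \<notin> F c t k \<and> (infinite (F c t k) \<or> k \<le> card (F c t k))) \<and>
     (\<forall>t k t' k'. 0 < k \<and> k \<le> t \<and> 0 < k' \<and> k' \<le> t' \<and> k + k' \<le> max t t'
        \<longrightarrow> F True t k \<inter> F False t' k' = {})"

definition F_union :: "fsys \<Rightarrow> nat \<Rightarrow> nat set" where
  "F_union F t = (\<Union>{F c \<tau> \<kappa> | c \<tau> \<kappa>. 0 < \<kappa> \<and> \<kappa> \<le> \<tau> \<and> \<tau> \<le> t})"

definition competitive_F_system :: "real \<Rightarrow> fsys \<Rightarrow> bool" where
  "competitive_F_system R F \<longleftrightarrow> F_system F \<and>
     (\<exists>lam::real. \<forall>t::nat. 0 < t \<longrightarrow>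
        finite (F_union F t) \<and> real (card (F_union F t)) \<le> R * real t + lam)"

end

theory Submission
  imports Defs "HOL-Library.Countable"
begin

lemma load_append[simp]: "load (xs @ ys) v = load xs v + load ys v"
  by (simp add: load_def)

lemma load_Nil[simp]: "load [] v = 0"
  by (simp add: load_def)

lemma load_Cons[simp]: "load (x # xs) v = (if x = v then 1 else 0) + load xs v"
  by (simp add: load_def)

lemma load_replicate[simp]: "load (replicate n a) v = (if a = v then n else 0)"
  by (simp add: load_def)

lemma load_eq_0_iff: "load xs v = 0 \<longleftrightarrow> v \<notin> set xs"
  by (auto simp add: load_def filter_empty_conv)

lemma load_take_le: "load (take n xs) v \<le> load xs v"
proof -
  have "load xs v = load (take n xs) v + load (drop n xs) v"
    by (metis append_take_drop_id load_append)
  then show ?thesis by simp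
qed

lemma load_take_mono: "m \<le> n \<Longrightarrow> load (take m xs) v \<le> load (take n xs) v"
proof -
  assume "m \<le> n"
  then obtain d where "n = m + d" by (metis le_add_diff_inverse)
  then show ?thesis by (simp add: take_add)
qed

lemma load_card: "load xs v = card {i. i < length xs \<and> xs ! i = v}"
  by (simp add: load_def length_filter_conv_card)

lemma alg_freqs_append:
  assumes "v \<notin> set ys"
  shows "alg_freqs alg E (xs @ ys) v = alg_freqs alg E xs v"
proof -
  have *: "i < length (xs @ ys) \<and> (xs @ ys) ! i = v \<longleftrightarrow> i < length xs \<and> xs ! i = v" for i
    using assms by (auto simp: nth_append)
  show ?thesis unfolding alg_freqs_def
  proof (intro equalityI subsetI)
    fix x assume "x \<in> {alg E (take (Suc i) (xs @ ys)) |i. i < length (xs @ ys) \<and> (xs @ ys) ! i = v}"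
    then obtain i where "x = alg E (take (Suc i) (xs @ ys))" "i < length (xs @ ys) \<and> (xs @ ys) ! i = v"
      by blast
    then show "x \<in> {alg E (take (Suc i) xs) |i. i < length xs \<and> xs ! i = v}"
      using * by auto
  next
    fix x assume "x \<in> {alg E (take (Suc i) xs) |i. i < length xs \<and> xs ! i = v}"
    then obtain i where "x = alg E (take (Suc i) xs)" "i < length xs" "xs ! i = v"
      by blast
    then show "x \<in> {alg E (take (Suc i) (xs @ ys)) |i. i < length (xs @ ys) \<and> (xs @ ys) ! i = v}"
      using * by (intro CollectI exI[of _ i]) auto
  qed
qed

lemma Union_alg_freqs:
  "(\<Union>v. alg_freqs alg E xs v) = (\<lambda>i. alg E (take (Suc i) xs)) ` {..<length xs}"
  unfolding alg_freqs_def by auto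

lemma finite_Union_alg_freqs: "finite (\<Union>v. alg_freqs alg E xs v)"
  unfolding Union_alg_freqs by simp

lemma feasible_exists:
  fixes l :: "'v \<Rightarrow> nat" and s :: "'v \<Rightarrow> bool"
  assumes s: "\<And>v w. E v w \<Longrightarrow> s v \<noteq> s w"
    and lT: "\<And>v. l v \<le> T"
    and eT: "\<And>v w. E v w \<Longrightarrow> l v + l w \<le> T"
  shows "\<exists>L. feasible_assignment E l L \<and> finite (\<Union>v. L v) \<and> card (\<Union>v. L v) \<le> T"
proof -
  define L where "L v = (if s v then {1..l v} else {Suc T - l v..T})" for v
  have fe: "feasible_assignment E l L"
    unfolding feasible_assignment_def
  proof (intro conjI allI impI)
    fix v
    show "finite (L v)" by (simp add: L_def)
    show "card (L v) = l v" using lT[of v] by (simp add: L_def)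
    show "0 \<notin> L v" using lT[of v] by (simp add: L_def)
  next
    fix v w assume "E v w"
    then have "s v \<noteq> s w" "l v + l w \<le> T" using s eT by auto
    then show "L v \<inter> L w = {}" by (auto simp: L_def)
  qed
  have sub: "(\<Union>v. L v) \<subseteq> {1..T}"
  proof
    fix x assume "x \<in> (\<Union>v. L v)"
    then obtain v where "x \<in> L v" by blast
    then show "x \<in> {1..T}" using lT[of v] by (auto simp: L_def split: if_splits)
  qed
  then have "finite (\<Union>v. L v)" by (rule finite_subset) simp
  moreover have "card (\<Union>v. L v) \<le> T" using card_mono[OF _ sub] by simp
  ultimately show ?thesis using fe by blast
qed

lemma opt_le:
  fixes l :: "'v \<Rightarrow> nat" and s :: "'v \<Rightarrow> bool"
  assumes s: "\<And>v w. E v w \<Longrightarrow> s v \<noteq> s w"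
    and lT: "\<And>v. l v \<le> T"
    and eT: "\<And>v w. E v w \<Longrightarrow> l v + l w \<le> T"
  shows "opt E l \<le> T"
proof -
  obtain L where L: "feasible_assignment E l L" "finite (\<Union>v. L v)" "card (\<Union>v. L v) \<le> T"
    using feasible_exists[of E s l T, OF s lT eT] by blast
  have "opt E l \<le> card (\<Union>v. L v)" unfolding opt_def
    by (rule Least_le, rule exI[of _ L]) (intro conjI L(1,2) refl)
  then show ?thesis using L(3) by linarith
qed

lemma opt_lower:
  fixes E :: "'v \<Rightarrow> 'v \<Rightarrow> bool"
  assumes b: "bipartite_graph E"
  shows "load xs v \<le> opt E (load xs)"
    and "E v w \<Longrightarrow> load xs v + load xs w \<le> opt E (load xs)"
proof -
  obtain s :: "'v \<Rightarrow> bool" where s: "\<And>v w. E v w \<Longrightarrow> s v \<noteq> s w" using b unfolding bipartite_graph_def by blast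
  have lT: "load xs u \<le> length xs" for u by (simp add: load_def)
  have eT: "load xs u + load xs u' \<le> length xs" if "E u u'" for u u'
  proof -
    have "u \<noteq> u'" using s[OF that] by auto
    have "load xs u' \<le> length (filter (\<lambda>x. \<not> x = u) xs)"
    proof -
      have "filter (\<lambda>x. x = u') xs = filter (\<lambda>x. x = u') (filter (\<lambda>x. \<not> x = u) xs)"
        unfolding filter_filter using \<open>u \<noteq> u'\<close> by (intro filter_cong) auto
      then show ?thesis unfolding load_def by (metis length_filter_le)
    qed
    moreover have "length (filter (\<lambda>x. x = u) xs) + length (filter (\<lambda>x. \<not> x = u) xs) = length xs"
      by (rule sum_length_filter_compl)
    ultimately show ?thesis unfolding load_def by linarith
  qed
  obtain L where "feasible_assignment E (load xs) L" "finite (\<Union>v. L v)"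
    using feasible_exists[of E s "load xs" "length xs", OF s lT eT] by blast
  then have "\<exists>n. \<exists>L. feasible_assignment E (load xs) L \<and> finite (\<Union>v. L v)
                    \<and> card (\<Union>v. L v) = n" by blast
  from LeastI_ex[OF this] obtain L where L: "feasible_assignment E (load xs) L" "finite (\<Union>v. L v)"
      "card (\<Union>v. L v) = opt E (load xs)"
    unfolding opt_def by blast
  have fin: "finite (L u)" "card (L u) = load xs u" for u
    using L(1) unfolding feasible_assignment_def by auto
  show "load xs v \<le> opt E (load xs)"
    using card_mono[OF L(2), of "L v"] fin L(3) by auto
  assume "E v w"
  then have d: "L v \<inter> L w = {}" using L(1) unfolding feasible_assignment_def by auto
  have "card (L v \<union> L w) = load xs v + load xs w"
    using card_Un_disjoint[OF fin(1) fin(1) d] fin by simp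
  moreover have "card (L v \<union> L w) \<le> card (\<Union>v. L v)"
    using L(2) by (intro card_mono) auto
  ultimately show "load xs v + load xs w \<le> opt E (load xs)" using L(3) by simp
qed

section \<open>From algorithms to F-systems\<close>

fun ph :: "(bool \<Rightarrow> nat \<Rightarrow> nat \<Rightarrow> 'v) \<Rightarrow> nat \<Rightarrow> nat \<Rightarrow> 'v list" where
  "ph V \<tau> 0 = []"
| "ph V \<tau> (Suc k) = ph V \<tau> k @ replicate (Suc k) (V True \<tau> (Suc k)) @ replicate (Suc k) (V False \<tau> (Suc k))"

fun sq :: "(bool \<Rightarrow> nat \<Rightarrow> nat \<Rightarrow> 'v) \<Rightarrow> nat \<Rightarrow> 'v list" where
  "sq V 0 = []"
| "sq V (Suc t) = sq V t @ ph V (Suc t) (Suc t)"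

definition EV :: "(bool \<Rightarrow> nat \<Rightarrow> nat \<Rightarrow> 'v) \<Rightarrow> 'v \<Rightarrow> 'v \<Rightarrow> bool" where
  "EV V u w \<longleftrightarrow> (\<exists>t k t' k'. 0 < k \<and> k \<le> t \<and> 0 < k' \<and> k' \<le> t' \<and> k + k' \<le> max t t' \<and>
      ((u = V True t k \<and> w = V False t' k') \<or> (u = V False t' k' \<and> w = V True t k)))"

locale injV =
  fixes V :: "bool \<Rightarrow> nat \<Rightarrow> nat \<Rightarrow> 'v"
  assumes V_inj: "V c t k = V c' t' k' \<longleftrightarrow> c = c' \<and> t = t' \<and> k = k'"
begin

lemma load_ph: "load (ph V \<tau> m) (V c \<tau>' k) = (if \<tau>' = \<tau> \<and> 0 < k \<and> k \<le> m then k else 0)"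
  by (induction m) (auto simp: V_inj)

lemma load_ph_other: "(\<forall>c t k. u \<noteq> V c t k) \<Longrightarrow> load (ph V \<tau> m) u = 0"
  by (induction m) auto

lemma load_sq: "load (sq V t) (V c \<tau> k) = (if 0 < k \<and> k \<le> \<tau> \<and> \<tau> \<le> t then k else 0)"
  by (induction t) (auto simp: load_ph V_inj simp del: ph.simps)

lemma load_sq_other: "(\<forall>c t k. u \<noteq> V c t k) \<Longrightarrow> load (sq V t) u = 0"
  by (induction t) (auto simp: load_ph_other simp del: ph.simps)

lemma load_sq_le: "load (sq V t) u \<le> t"
proof (cases "\<exists>c \<tau> k. u = V c \<tau> k")
  case True
  then obtain c \<tau> k where "u = V c \<tau> k" by blast
  then show ?thesis by (simp add: load_sq)
next
  case False
  then show ?thesis by (simp add: load_sq_other)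
qed

definition sideV :: "'v \<Rightarrow> bool" where "sideV u \<longleftrightarrow> (\<exists>t k. u = V True t k)"

lemma EV_side: "EV V u w \<Longrightarrow> sideV u \<noteq> sideV w"
  unfolding EV_def sideV_def by (auto simp: V_inj)

lemma EV_sym: "EV V u w \<Longrightarrow> EV V w u"
  unfolding EV_def by blast

lemma EV_bip: "bipartite_graph (EV V)"
  unfolding bipartite_graph_def using EV_sym EV_side by blast

lemma EV_sum: "EV V u w \<Longrightarrow> load (sq V t) u + load (sq V t) w \<le> t"
  unfolding EV_def by (auto simp: load_sq)

lemma opt_sq: "opt (EV V) (load (sq V t)) \<le> t"
  by (rule opt_le[of _ sideV]) (auto simp: EV_side load_sq_le EV_sum)

lemma freqs_stable:
  assumes "t \<le> m"
  shows "alg_freqs alg E (sq V m) (V c t k) = alg_freqs alg E (sq V t) (V c t k)"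
  using assms
proof (induction m rule: dec_induct)
  case base
  then show ?case by simp
next
  case (step n)
  have "V c t k \<notin> set (ph V (Suc n) (Suc n))"
    using step(1) by (simp add: load_eq_0_iff[symmetric] load_ph del: ph.simps)
  then show ?case using step(3) by (simp add: alg_freqs_append del: ph.simps)
qed

end

lemma alg_to_F:
  fixes alg :: "'v algorithm"
  assumes R: "R \<ge> 1" and inf: "infinite (UNIV :: 'v set)"
    and ca: "competitive_alg R alg"
  shows "\<exists>F. competitive_F_system R F"
proof -
  obtain f :: "nat \<Rightarrow> 'v" where f: "inj f" using infinite_countable_subset[OF inf] by blast
  define V :: "bool \<Rightarrow> nat \<Rightarrow> nat \<Rightarrow> 'v" where "V c t k = f (to_nat (c, t, k))" for c t k
  interpret injV V
    by unfold_locales (auto simp: V_def inj_eq[OF f] inj_eq[OF inj_to_nat])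
  obtain lam where lam: "\<And>E xs. bipartite_graph E \<Longrightarrow>
        alg_valid alg E xs \<and> real (alg_cost alg E xs) \<le> R * real (opt E (load xs)) + lam"
    using ca unfolding competitive_alg_def by blast
  define F where "F c t k = alg_freqs alg (EV V) (sq V t) (V c t k)" for c t k
  have valid: "alg_valid alg (EV V) (sq V t)" for t using lam[OF EV_bip] by blast
  have v1: "card (alg_freqs alg (EV V) (sq V t) v) = load (sq V t) v"
      "0 \<notin> alg_freqs alg (EV V) (sq V t) v" for t v
    using valid[of t] unfolding alg_valid_def by blast+
  have v2: "alg_freqs alg (EV V) (sq V t) v \<inter> alg_freqs alg (EV V) (sq V t) w = {}"
    if "EV V v w" for t v w
    using valid[of t] that unfolding alg_valid_def by blast
  have fs: "F_system F"
    unfolding F_system_def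
  proof (intro conjI allI impI)
    fix c :: bool and t k :: nat assume tk: "0 < k \<and> k \<le> t"
    show "0 \<notin> F c t k" unfolding F_def by (rule v1(2))
    have "card (F c t k) = k" unfolding F_def v1(1) using tk
      by (simp add: load_sq)
    then show "infinite (F c t k) \<or> k \<le> card (F c t k)" by simp
  next
    fix t k t' k' :: nat assume h: "0 < k \<and> k \<le> t \<and> 0 < k' \<and> k' \<le> t' \<and> k + k' \<le> max t t'"
    define m where "m = max t t'"
    have "F True t k = alg_freqs alg (EV V) (sq V m) (V True t k)"
      unfolding F_def m_def using freqs_stable[of t "max t t'"] by simp
    moreover have "F False t' k' = alg_freqs alg (EV V) (sq V m) (V False t' k')"
      unfolding F_def m_def using freqs_stable[of t' "max t t'"] by simp
    moreover have "EV V (V True t k) (V False t' k')"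
      unfolding EV_def using h
      by (intro exI[of _ t] exI[of _ k] exI[of _ t'] exI[of _ k']) simp
    ultimately show "F True t k \<inter> F False t' k' = {}"
      using v2[of "V True t k" "V False t' k'" m] by simp
  qed
  have "finite (F_union F t) \<and> real (card (F_union F t)) \<le> R * real t + lam" if "0 < t" for t :: nat
  proof -
    have sub: "F_union F t \<subseteq> (\<Union>v. alg_freqs alg (EV V) (sq V t) v)"
    proof
      fix x assume "x \<in> F_union F t"
      then obtain c \<tau> \<kappa> where x: "x \<in> F c \<tau> \<kappa>" "\<tau> \<le> t"
        unfolding F_union_def by auto
      then have "x \<in> alg_freqs alg (EV V) (sq V t) (V c \<tau> \<kappa>)"
        unfolding F_def using freqs_stable[of \<tau> t] by simp
      then show "x \<in> (\<Union>v. alg_freqs alg (EV V) (sq V t) v)" by blast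
    qed
    have fin: "finite (F_union F t)" using finite_subset[OF sub finite_Union_alg_freqs] .
    have "card (F_union F t) \<le> alg_cost alg (EV V) (sq V t)"
      unfolding alg_cost_def using card_mono[OF finite_Union_alg_freqs sub] .
    then have "real (card (F_union F t)) \<le> R * real (opt (EV V) (load (sq V t))) + lam"
      using lam[OF EV_bip, of "sq V t"] by linarith
    also have "\<dots> \<le> R * real t + lam"
      using opt_sq[of t] R by (simp add: mult_left_mono)
    finally show ?thesis using fin by simp
  qed
  then show ?thesis unfolding competitive_F_system_def using fs by blast
qed

section \<open>From F-systems to algorithms\<close>

definition side :: "('v \<Rightarrow> 'v \<Rightarrow> bool) \<Rightarrow> 'v \<Rightarrow> bool" where
  "side E = (SOME s. \<forall>v w. E v w \<longrightarrow> s v \<noteq> s w)"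

lemma side_prop:
  assumes b: "bipartite_graph E" and e: "E v w"
  shows "side E v \<noteq> side E w"
proof -
  obtain s0 :: "'a \<Rightarrow> bool" where s0: "\<forall>v w. E v w \<longrightarrow> s0 v \<noteq> s0 w"
    using b unfolding bipartite_graph_def by blast
  have "\<forall>v w. E v w \<longrightarrow> side E v \<noteq> side E w"
    unfolding side_def by (rule someI[of "\<lambda>s. \<forall>v w. E v w \<longrightarrow> s v \<noteq> s w", OF s0])
  then show ?thesis using e by blast
qed

definition tv :: "('v \<Rightarrow> 'v \<Rightarrow> bool) \<Rightarrow> 'v list \<Rightarrow> 'v \<Rightarrow> nat" where
  "tv E ys v = Max (insert (load ys v) ((\<lambda>w. load ys v + load ys w) ` {w. w \<in> set ys \<and> E v w}))"

lemma tv_ge1: "load ys v \<le> tv E ys v"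
  unfolding tv_def by (rule Max_ge) auto

lemma tv_ge2: "w \<in> set ys \<Longrightarrow> E v w \<Longrightarrow> load ys v + load ys w \<le> tv E ys v"
  unfolding tv_def by (rule Max_ge) auto

lemma tv_le: "load ys v \<le> B \<Longrightarrow> (\<And>w. w \<in> set ys \<Longrightarrow> E v w \<Longrightarrow> load ys v + load ys w \<le> B)
    \<Longrightarrow> tv E ys v \<le> B"
  unfolding tv_def by (subst Max_le_iff) auto

function galg :: "fsys \<Rightarrow> ('v \<Rightarrow> 'v \<Rightarrow> bool) \<Rightarrow> 'v list \<Rightarrow> nat" where
  "galg F E ys = (if ys = [] then 0 else
     (SOME f. f \<in> F (side E (last ys)) (tv E ys (last ys)) (load ys (last ys)) \<and>
        f \<notin> set (map (\<lambda>i. galg F E (take (Suc i) (butlast ys)))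
                   (filter (\<lambda>i. butlast ys ! i = last ys) [0..<length (butlast ys)]))))"
  by pat_completeness auto
termination by (relation "measure (\<lambda>(F, E, ys). length ys)") auto

declare galg.simps[simp del]

lemma galg_take:
  assumes i: "i < length xs"
  shows "galg F E (take (Suc i) xs) = (SOME f. f \<in> F (side E (xs!i)) (tv E (take (Suc i) xs) (xs!i))
      (load (take (Suc i) xs) (xs!i)) \<and> f \<notin> (\<lambda>j. galg F E (take (Suc j) xs)) ` {j. j < i \<and> xs!j = xs!i})"
proof -
  have ts: "take (Suc i) xs = take i xs @ [xs!i]" using i by (rule take_Suc_conv_app_nth)
  have bl: "butlast (take (Suc i) xs) = take i xs" and la: "last (take (Suc i) xs) = xs!i"
    and ne: "take (Suc i) xs \<noteq> []" using ts by simp_all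
  have li: "length (take i xs) = i" using i by simp
  have U: "set (map (\<lambda>j. galg F E (take (Suc j) (take i xs))) (filter (\<lambda>j. take i xs ! j = xs!i) [0..<i]))
      = (\<lambda>j. galg F E (take (Suc j) xs)) ` {j. j < i \<and> xs!j = xs!i}"
  proof -
    have A: "set (filter (\<lambda>j. take i xs ! j = xs!i) [0..<i]) = {j. j < i \<and> xs!j = xs!i}"
      by auto
    have B: "j < i \<Longrightarrow> take (Suc j) (take i xs) = take (Suc j) xs" for j
      by (simp add: min_def)
    show ?thesis unfolding set_map using A B by (intro image_cong) auto
  qed
  show ?thesis
    using galg.simps[of F E "take (Suc i) xs"] by (simp only: ne bl la li U if_False)
qed

lemma galg_prop:
  assumes FS: "F_system F" and i: "i < length xs"
  shows "galg F E (take (Suc i) xs) \<in> F (side E (xs!i)) (tv E (take (Suc i) xs) (xs!i))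
            (load (take (Suc i) xs) (xs!i))"
    and "\<And>j. j < i \<Longrightarrow> xs!j = xs!i \<Longrightarrow> galg F E (take (Suc j) xs) \<noteq> galg F E (take (Suc i) xs)"
proof -
  define c where "c = side E (xs!i)"
  define t where "t = tv E (take (Suc i) xs) (xs!i)"
  define k where "k = load (take (Suc i) xs) (xs!i)"
  define U where "U = (\<lambda>j. galg F E (take (Suc j) xs)) ` {j. j < i \<and> xs!j = xs!i}"
  have ts: "take (Suc i) xs = take i xs @ [xs!i]" using i by (rule take_Suc_conv_app_nth)
  have k: "k = Suc (load (take i xs) (xs!i))" unfolding k_def ts by simp
  have kt: "k \<le> t" unfolding k_def t_def by (rule tv_ge1)
  have finU: "finite U" unfolding U_def by simp
  have cardU: "card U \<le> load (take i xs) (xs!i)"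
  proof -
    have "card U \<le> card {j. j < i \<and> xs!j = xs!i}" unfolding U_def by (rule card_image_le) simp
    also have "{j. j < i \<and> xs!j = xs!i} = {j. j < length (take i xs) \<and> take i xs ! j = xs!i}"
      using i by auto
    also have "card \<dots> = load (take i xs) (xs!i)" by (simp add: load_card)
    finally show ?thesis .
  qed
  have ex: "\<exists>f. f \<in> F c t k \<and> f \<notin> U"
  proof (cases "finite (F c t k)")
    case True
    have "0 < k" using k by simp
    then have "infinite (F c t k) \<or> k \<le> card (F c t k)"
      using conjunct1[OF FS[unfolded F_system_def]] kt by blast
    then have kc: "k \<le> card (F c t k)" using True by blast
    have "\<not> F c t k \<subseteq> U"
    proof
      assume "F c t k \<subseteq> U"
      then have "card (F c t k) \<le> card U" by (rule card_mono[OF finU])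
      then show False using kc cardU k by linarith
    qed
    then show ?thesis by blast
  next
    case False
    then have "infinite (F c t k - U)" using Diff_infinite_finite[OF finU] by blast
    then have "F c t k - U \<noteq> {}" using infinite_imp_nonempty by blast
    then show ?thesis by blast
  qed
  have eq: "galg F E (take (Suc i) xs) = (SOME f. f \<in> F c t k \<and> f \<notin> U)"
    unfolding c_def t_def k_def U_def by (rule galg_take[OF i])
  from someI_ex[OF ex] have P: "galg F E (take (Suc i) xs) \<in> F c t k \<and> galg F E (take (Suc i) xs) \<notin> U"
    unfolding eq .
  then show "galg F E (take (Suc i) xs) \<in> F (side E (xs!i)) (tv E (take (Suc i) xs) (xs!i))
            (load (take (Suc i) xs) (xs!i))" unfolding c_def t_def k_def by blast
  fix j assume "j < i" "xs!j = xs!i"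
  then have "galg F E (take (Suc j) xs) \<in> U" unfolding U_def by blast
  then show "galg F E (take (Suc j) xs) \<noteq> galg F E (take (Suc i) xs)" using P by force
qed

lemma kt_bounds:
  assumes "i < length xs"
  shows "0 < load (take (Suc i) xs) (xs!i)" "load (take (Suc i) xs) (xs!i) \<le> tv E (take (Suc i) xs) (xs!i)"
proof -
  have ts: "take (Suc i) xs = take i xs @ [xs!i]" using assms by (rule take_Suc_conv_app_nth)
  show "0 < load (take (Suc i) xs) (xs!i)" unfolding ts by simp
  show "load (take (Suc i) xs) (xs!i) \<le> tv E (take (Suc i) xs) (xs!i)" by (rule tv_ge1)
qed

lemma galg_neq_edge:
  assumes B: "bipartite_graph E" and FS: "F_system F" and ji: "j < i" and i: "i < length xs"
    and e: "E (xs!i) (xs!j)"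
  shows "galg F E (take (Suc j) xs) \<noteq> galg F E (take (Suc i) xs)"
proof
  assume eq: "galg F E (take (Suc j) xs) = galg F E (take (Suc i) xs)"
  have j: "j < length xs" using ji i by simp
  define ci where "ci = side E (xs!i)"
  define ti where "ti = tv E (take (Suc i) xs) (xs!i)"
  define ki where "ki = load (take (Suc i) xs) (xs!i)"
  define cj where "cj = side E (xs!j)"
  define tj where "tj = tv E (take (Suc j) xs) (xs!j)"
  define kj where "kj = load (take (Suc j) xs) (xs!j)"
  have mi: "galg F E (take (Suc i) xs) \<in> F ci ti ki"
    unfolding ci_def ti_def ki_def by (rule galg_prop(1)[OF FS i])
  have mj: "galg F E (take (Suc i) xs) \<in> F cj tj kj"
    unfolding cj_def tj_def kj_def eq[symmetric] by (rule galg_prop(1)[OF FS j])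
  have cij: "ci \<noteq> cj" unfolding ci_def cj_def by (rule side_prop[OF B e])
  have bi: "0 < ki" "ki \<le> ti" unfolding ki_def ti_def using kt_bounds[OF i] by auto
  have bj: "0 < kj" "kj \<le> tj" unfolding kj_def tj_def using kt_bounds[OF j] by auto
  have "kj \<le> load (take (Suc i) xs) (xs!j)" unfolding kj_def
    by (rule load_take_mono) (use ji in simp)
  moreover have "xs!j \<in> set (take (Suc i) xs)"
  proof -
    have "take (Suc i) xs ! j = xs ! j" "j < length (take (Suc i) xs)" using ji i by auto
    then show ?thesis by (metis nth_mem)
  qed
  then have "ki + load (take (Suc i) xs) (xs!j) \<le> ti" unfolding ki_def ti_def
    by (rule tv_ge2) (rule e)
  ultimately have sum: "ki + kj \<le> ti" by linarith
  have disj: "\<And>t k t' k'. 0 < k \<Longrightarrow> k \<le> t \<Longrightarrow> 0 < k' \<Longrightarrow> k' \<le> t' \<Longrightarrow> k + k' \<le> max t t'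
        \<Longrightarrow> F True t k \<inter> F False t' k' = {}"
  proof -
    fix t k t' k' :: nat
    assume h: "0 < k" "k \<le> t" "0 < k'" "k' \<le> t'" "k + k' \<le> max t t'"
    have D: "\<forall>t k t' k'. 0 < k \<and> k \<le> t \<and> 0 < k' \<and> k' \<le> t' \<and> k + k' \<le> max t t'
        \<longrightarrow> F True t k \<inter> F False t' k' = {}"
      using FS unfolding F_system_def by (rule conjunct2)
    show "F True t k \<inter> F False t' k' = {}" using D[rule_format, of k t k' t'] h by simp
  qed
  show False
  proof (cases ci)
    case True
    then have "cj = False" using cij by simp
    have d: "F True ti ki \<inter> F False tj kj = {}" by (rule disj) (use bi bj sum in auto)
    have "galg F E (take (Suc i) xs) \<in> F True ti ki" using mi True by simp
    moreover have "galg F E (take (Suc i) xs) \<in> F False tj kj" using mj \<open>cj = False\<close> by simp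
    ultimately show False using d by auto
  next
    case False
    then have "cj = True" using cij by simp
    have d: "F True tj kj \<inter> F False ti ki = {}" by (rule disj) (use bi bj sum in auto)
    have "galg F E (take (Suc i) xs) \<in> F False ti ki" using mi False by simp
    moreover have "galg F E (take (Suc i) xs) \<in> F True tj kj" using mj \<open>cj = True\<close> by simp
    ultimately show False using d by auto
  qed
qed

lemma F_to_alg:
  fixes F :: fsys
  assumes R: "R \<ge> 1" and cf: "competitive_F_system R F"
  shows "competitive_alg R (galg F :: 'v algorithm)"
proof -
  have FS: "F_system F" using cf unfolding competitive_F_system_def by blast
  obtain lam where lam: "\<And>t. 0 < t \<Longrightarrow> finite (F_union F t) \<and> real (card (F_union F t)) \<le> R * real t + lam"
    using cf unfolding competitive_F_system_def by blast
  have F0: "0 \<notin> F c t k" if "0 < k" "k \<le> t" for c t k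
    using conjunct1[OF FS[unfolded F_system_def], rule_format, of k t c] that by simp
  show ?thesis unfolding competitive_alg_def
  proof (intro exI[of _ "\<bar>lam\<bar>"] allI impI conjI)
    fix E :: "'v \<Rightarrow> 'v \<Rightarrow> bool" and xs assume B: "bipartite_graph E"
    define fr where "fr i = galg F E (take (Suc i) xs)" for i
    have AF: "alg_freqs (galg F) E xs v = fr ` {i. i < length xs \<and> xs!i = v}" for v
      unfolding alg_freqs_def fr_def by auto
    have mem: "fr i \<in> F (side E (xs!i)) (tv E (take (Suc i) xs) (xs!i)) (load (take (Suc i) xs) (xs!i))"
      if "i < length xs" for i
      unfolding fr_def by (rule galg_prop(1)[OF FS that])
    have inj: "inj_on fr {i. i < length xs \<and> xs!i = v}" for v
    proof (rule inj_onI)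
      fix i j assume i: "i \<in> {i. i < length xs \<and> xs!i = v}" and j: "j \<in> {i. i < length xs \<and> xs!i = v}"
        and eq: "fr i = fr j"
      show "i = j"
      proof (rule ccontr)
        assume "i \<noteq> j"
        then consider "j < i" | "i < j" by linarith
        then show False
        proof cases
          case 1
          then show False using galg_prop(2)[OF FS, of i xs j E] i j eq unfolding fr_def by auto
        next
          case 2
          then show False using galg_prop(2)[OF FS, of j xs i E] i j eq unfolding fr_def by auto
        qed
      qed
    qed
    show "alg_valid (galg F) E xs" unfolding alg_valid_def
    proof (intro conjI allI impI)
      fix v
      show "card (alg_freqs (galg F) E xs v) = load xs v"
        unfolding AF card_image[OF inj] load_card ..
      show "0 \<notin> alg_freqs (galg F) E xs v"
      proof
        assume "0 \<in> alg_freqs (galg F) E xs v"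
        then obtain i where i: "i < length xs" "fr i = 0" unfolding AF by auto
        show False using mem[OF i(1)] F0[OF kt_bounds[OF i(1)]] i(2) by simp
      qed
    next
      fix v w assume e: "E v w"
      show "alg_freqs (galg F) E xs v \<inter> alg_freqs (galg F) E xs w = {}"
      proof (rule ccontr)
        assume "alg_freqs (galg F) E xs v \<inter> alg_freqs (galg F) E xs w \<noteq> {}"
        then obtain i j where i: "i < length xs" "xs!i = v" and j: "j < length xs" "xs!j = w"
          and eq: "fr i = fr j" unfolding AF by auto
        have "v \<noteq> w" using side_prop[OF B e] by auto
        then have "i \<noteq> j" using i j by auto
        then consider "j < i" | "i < j" by linarith
        then show False
        proof cases
          case 1
          then show False using galg_neq_edge[OF B FS 1 i(1)] e i j eq unfolding fr_def by auto
        next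
          case 2
          have "E w v" using B e unfolding bipartite_graph_def by blast
          then show False using galg_neq_edge[OF B FS 2 j(1)] i j eq unfolding fr_def by auto
        qed
      qed
    qed
    show "real (alg_cost (galg F) E xs) \<le> R * real (opt E (load xs)) + \<bar>lam\<bar>"
    proof (cases "xs = []")
      case True
      then have "alg_cost (galg F) E xs = 0" unfolding alg_cost_def Union_alg_freqs by simp
      moreover have "0 \<le> R * real (opt E (load xs))" using R by simp
      ultimately show ?thesis by simp
    next
      case False
      define T where "T = opt E (load xs)"
      have tvT: "tv E (take (Suc i) xs) (xs!i) \<le> T" if "i < length xs" for i
      proof (rule tv_le)
        show "load (take (Suc i) xs) (xs!i) \<le> T" unfolding T_def
          using load_take_le[of "Suc i" xs "xs!i"] opt_lower(1)[OF B, of xs "xs!i"] by linarith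
        fix w assume "w \<in> set (take (Suc i) xs)" "E (xs!i) w"
        have "load xs (xs!i) + load xs w \<le> T" unfolding T_def by (rule opt_lower(2)[OF B \<open>E (xs!i) w\<close>])
        moreover have "load (take (Suc i) xs) (xs!i) \<le> load xs (xs!i)" "load (take (Suc i) xs) w \<le> load xs w"
          by (rule load_take_le)+
        ultimately show "load (take (Suc i) xs) (xs!i) + load (take (Suc i) xs) w \<le> T" by linarith
      qed
      have l0: "0 < length xs" using False by simp
      have T0: "0 < T" using kt_bounds(1)[OF l0] kt_bounds(2)[OF l0, of E] tvT[OF l0] by linarith
      have sub: "(\<Union>v. alg_freqs (galg F) E xs v) \<subseteq> F_union F T"
      proof
        fix x assume "x \<in> (\<Union>v. alg_freqs (galg F) E xs v)"
        then obtain i where i: "i < length xs" "x = fr i" unfolding Union_alg_freqs fr_def by auto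
        have "x \<in> F (side E (xs!i)) (tv E (take (Suc i) xs) (xs!i)) (load (take (Suc i) xs) (xs!i))"
          using mem[OF i(1)] i(2) by simp
        moreover have "0 < load (take (Suc i) xs) (xs!i)" "load (take (Suc i) xs) (xs!i) \<le> tv E (take (Suc i) xs) (xs!i)"
          using kt_bounds[OF i(1)] by auto
        ultimately have "x \<in> F (side E (xs!i)) (tv E (take (Suc i) xs) (xs!i)) (load (take (Suc i) xs) (xs!i))
          \<and> 0 < load (take (Suc i) xs) (xs!i) \<and> load (take (Suc i) xs) (xs!i) \<le> tv E (take (Suc i) xs) (xs!i)
          \<and> tv E (take (Suc i) xs) (xs!i) \<le> T" using tvT[OF i(1)] by blast
        then show "x \<in> F_union F T" unfolding F_union_def by blast
      qed
      have "alg_cost (galg F) E xs \<le> card (F_union F T)"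
        unfolding alg_cost_def using card_mono[OF _ sub] lam[OF T0] by blast
      then have "real (alg_cost (galg F) E xs) \<le> R * real T + lam" using lam[OF T0] by linarith
      then show ?thesis unfolding T_def by linarith
    qed
  qed
qed

theorem lemma1:
  fixes R :: real
  assumes "R \<ge> 1"
    and "infinite (UNIV :: 'v set)"
  shows "(\<exists>alg :: 'v algorithm. competitive_alg R alg) \<longleftrightarrow> (\<exists>F. competitive_F_system R F)"
proof
  assume "\<exists>alg :: 'v algorithm. competitive_alg R alg"
  then obtain alg :: "'v algorithm" where "competitive_alg R alg" by blast
  then show "\<exists>F. competitive_F_system R F" using alg_to_F[OF assms] by blast
next
  assume "\<exists>F. competitive_F_system R F"
  then obtain F where "competitive_F_system R F" by blast
  then have "competitive_alg R (galg F :: 'v algorithm)" using F_to_alg[OF assms(1)] by blast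
  then show "\<exists>alg :: 'v algorithm. competitive_alg R alg" by blast
qed

end
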